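(* Let $S\subseteq\mathbb{N}^{\mathbb{N}}$. Suppose that for every finite sequence $g\in\mathbb{N}^{<\mathbb{N}}$ there are sequences $g_1,g_2\in\mathbb{N}^{\mathbb{N}}$, both extending $g$, with $g_1\in S$ and $g_2\notin S$. Then $S$ is not guessable.
   Context: $\mathbb{N}^{\mathbb{N}}$ is the set of all sequences $f:\mathbb{N}\to\mathbb{N}$ and $\mathbb{N}^{<\mathbb{N}}$ is the set of all finite sequences of naturals. A function $G:\mathbb{N}^{<\mathbb{N}}\to\{0,1\}$ is a guesser for $S\subseteq\mathbb{N}^{\mathbb{N}}$ if for every $f:\mathbb{N}\to\mathbb{N}$ there is some $m>0$ such that for all $n>m$, $G(f(0),\ldots,f(n))=1$ if $f\in S$ and $G(f(0),\ldots,f(n))=0$ if $f\notin S$. A set $S$ is guessable if it has a guesser. *)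

theory Defs
  imports Main
begin

text \<open>Finite sequences of naturals are lists; infinite sequences are functions nat => nat.
  The prefix (f(0),...,f(n)) is  map f [0..<Suc n].\<close>

definition is_guesser :: "(nat list \<Rightarrow> bool) \<Rightarrow> (nat \<Rightarrow> nat) set \<Rightarrow> bool" where
  "is_guesser G S \<longleftrightarrow>
     (\<forall>f :: nat \<Rightarrow> nat. \<exists>m > 0. \<forall>n > m.
        (f \<in> S \<longrightarrow> G (map f [0..<Suc n]) = True) \<and>
        (f \<notin> S \<longrightarrow> G (map f [0..<Suc n]) = False))"

definition guessable :: "(nat \<Rightarrow> nat) set \<Rightarrow> bool" where
  "guessable S \<longleftrightarrow> (\<exists>G. is_guesser G S)"

definition extends :: "(nat \<Rightarrow> nat) \<Rightarrow> nat list \<Rightarrow> bool" where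
  "extends f g \<longleftrightarrow> map f [0..<length g] = g"

end

theory Submission
  imports Defs
begin

theorem theorem2p2:
  fixes S :: "(nat \<Rightarrow> nat) set"
  assumes "\<forall>g :: nat list. \<exists>g1 g2. extends g1 g \<and> extends g2 g \<and> g1 \<in> S \<and> g2 \<notin> S"
  shows "\<not> guessable S"
proof
  assume "guessable S"
  then obtain G where G: "is_guesser G S" unfolding guessable_def by blast
  have step: "\<exists>q. length q > length p \<and> take (length p) q = p \<and> G q = b" for p b
  proof -
    obtain g where ext: "extends g p" and gS: "g \<in> S \<longleftrightarrow> b"
      using assms by (cases b) blast+
    obtain m where m: "\<forall>n > m. (g \<in> S \<longrightarrow> G (map g [0..<Suc n]) = True) \<and>
        (g \<notin> S \<longrightarrow> G (map g [0..<Suc n]) = False)"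
      using G unfolding is_guesser_def by blast
    define n where "n = max (m+1) (length p)"
    have "G (map g [0..<Suc n]) = b" using m gS unfolding n_def by (cases b) auto
    moreover have "take (length p) (map g [0..<Suc n]) = p"
      using ext unfolding extends_def n_def by (simp add: take_map)
    moreover have "length (map g [0..<Suc n]) > length p" unfolding n_def by simp
    ultimately show ?thesis by blast
  qed
  define nxt where "nxt = (\<lambda>b p. SOME q. length q > length p \<and> take (length p) q = p \<and> G q = b)"
  have nxt: "length (nxt b p) > length p \<and> take (length p) (nxt b p) = p \<and> G (nxt b p) = b" for b p
    unfolding nxt_def using someI_ex[OF step[of p b]] .
  define L where "L = rec_nat [] (\<lambda>i p. nxt (even i) p)"
  have L0: "L 0 = []" and LS: "L (Suc i) = nxt (even i) (L i)" for i unfolding L_def by simp_all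
  have len: "i \<le> length (L i)" for i
    proof (induction i)
    case (Suc i) then show ?case using nxt[where b="even i" and p="L i"] LS[of i] by simp
  qed (simp add: L0)
  have pre: "j \<le> i \<Longrightarrow> take (length (L j)) (L i) = L j" for i j
  proof (induction i)
    case 0 thus ?case by (simp add: L0)
  next
    case (Suc i)
    show ?case
    proof (cases "j = Suc i")
      case False
      then have "j \<le> i" using Suc.prems by simp
      then have h: "take (length (L j)) (L i) = L j" using Suc.IH by simp
      have h2: "take (length (L i)) (L (Suc i)) = L i" using nxt LS by simp
      have "length (take (length (L j)) (L i)) = length (L j)" using h by simp
      then have "length (L j) \<le> length (L i)" by simp
      then have "take (length (L j)) (L (Suc i)) = take (length (L j)) (take (length (L i)) (L (Suc i)))"
        by (simp add: min_def)
      then show ?thesis using h h2 by simp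
    qed simp
  qed
  have nth_eq: "k < length (L a) \<Longrightarrow> k < length (L b) \<Longrightarrow> L a ! k = L b ! k" for a b k
  proof (cases "a \<le> b")
    case True
    assume k: "k < length (L a)"
    have "L a ! k = take (length (L a)) (L b) ! k" using pre[OF True] by simp
    then show ?thesis using k by simp
  next
    case False
    assume k: "k < length (L b)"
    have "L b ! k = take (length (L b)) (L a) ! k" using pre[of b a] False by simp
    then show ?thesis using k by simp
  qed
  define f where "f k = L (Suc k) ! k" for k
  have mapf: "map f [0..<length (L i)] = L i" for i
  proof (rule nth_equalityI)
    fix k assume "k < length (map f [0..<length (L i)])"
    then have k: "k < length (L i)" by simp
    have "k < length (L (Suc k))" using len[of "Suc k"] by simp
    then have "L (Suc k) ! k = L i ! k" using k by (rule nth_eq)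
    then show "map f [0..<length (L i)] ! k = L i ! k" using k unfolding f_def by simp
  qed simp
  obtain m where m: "\<forall>n > m. (f \<in> S \<longrightarrow> G (map f [0..<Suc n]) = True) \<and>
        (f \<notin> S \<longrightarrow> G (map f [0..<Suc n]) = False)"
    using G unfolding is_guesser_def by blast
  have key: "G (L i) = (f \<in> S)" if "i \<ge> m + 2" for i
  proof -
    have l: "length (L i) \<ge> m + 2" using len[of i] that by simp
    define n where "n = length (L i) - 1"
    have "Suc n = length (L i)" "n > m" using l unfolding n_def by auto
    then show ?thesis using m[rule_format, of n] mapf[of i] by (cases "f \<in> S") auto
  qed
  have "G (L (Suc (m+2))) = even (m+2)" "G (L (Suc (Suc (m+2)))) = even (Suc (m+2))"
    using nxt LS by simp_all
  moreover have "G (L (Suc (m+2))) = G (L (Suc (Suc (m+2))))" using key by simp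
  ultimately show False by simp
qed

end
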